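(* Let $N\ge 2$ and let $p,p'$ be two paths of length $N$. Then $p$ and $p'$ produce identical shapes if and only if their edge matrices are identical.
   Context: A path of length $N$ is a vector $p=(p_0,\dots,p_{N-1})$ whose entries are the integers $0,\dots,N-1$ in some order; indices are cyclic, $p_N=p_0$, $s_{-1}=s_{N-1}$. Nodes $0,\dots,N-1$ are placed at equally spaced points clockwise around a circle; the shape of $p$ is the set of chords (unordered node pairs) $\{p_n,p_{n+1}\}$, $n=0,\dots,N-1$. The path differences are $d_n=p_{n+1}-p_n$, and the steps are $s_n=d_n$ if $|d_n|<N/2$; $s_n=N/2$ if $|d_n|=N/2$; $s_n=d_n-N$ if $d_n>N/2$; $s_n=d_n+N$ if $d_n<-N/2$. The edge matrix $E=(e_{in})\in\mathbb{Z}^{2\times N}$ of $p$ is defined column by column: for node $n\in\{0,\dots,N-1\}$ let $k$ be the index with $p_k=n$; take the two integers $s_k$ and $-s_{k-1}$, replace each of them by $0$ if its absolute value equals $N/2$, and let $e_{1n}\le e_{2n}$ be these two integers sorted in nondecreasing order. *)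

theory Defs
  imports Main
begin

definition is_path :: "nat \<Rightarrow> int list \<Rightarrow> bool" where
  "is_path N p \<longleftrightarrow> length p = N \<and> distinct p \<and> set p = {0..<int N}"

definition pth :: "int list \<Rightarrow> nat \<Rightarrow> int" where
  "pth p n = p ! (n mod length p)"

definition pdiff :: "int list \<Rightarrow> nat \<Rightarrow> int" where
  "pdiff p n = pth p (n + 1) - pth p n"

definition step_of :: "nat \<Rightarrow> int \<Rightarrow> int" where
  "step_of N d =
     (if 2 * \<bar>d\<bar> < int N then d
      else if 2 * \<bar>d\<bar> = int N then int N div 2
      else if 2 * d > int N then d - int N
      else d + int N)"

definition psteps :: "int list \<Rightarrow> nat \<Rightarrow> int" where
  "psteps p n = step_of (length p) (pdiff p n)"

definition prev_idx :: "nat \<Rightarrow> nat \<Rightarrow> nat" where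
  "prev_idx N k = (k + N - 1) mod N"

definition zero_half :: "nat \<Rightarrow> int \<Rightarrow> int" where
  "zero_half N x = (if 2 * \<bar>x\<bar> = int N then 0 else x)"

definition edge_col :: "int list \<Rightarrow> nat \<Rightarrow> int \<times> int" where
  "edge_col p n =
     (let N = length p; k = (THE k. k < N \<and> p ! k = int n);
          a = zero_half N (psteps p k);
          b = zero_half N (- psteps p (prev_idx N k))
      in (min a b, max a b))"

text \<open>The edge matrix E \<in> Z^{2\<times>N}, represented as the list of its N columns.\<close>
definition edge_matrix :: "int list \<Rightarrow> (int \<times> int) list" where
  "edge_matrix p = map (edge_col p) [0..<length p]"

definition shape :: "int list \<Rightarrow> int set set" where
  "shape p = {{pth p n, pth p (n + 1)} | n. n < length p}"

end

theory Submission
  imports Defs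
begin
lemma half: obtains h where "int N div 2 = h" "int N = 2*h \<or> int N = 2*h+1"
proof -
  have "int N = 2*(int N div 2) \<or> int N = 2*(int N div 2)+1" by presburger
  then show ?thesis using that by blast
qed
lemma zh_neg: assumes "\<bar>d\<bar> < int N"
  shows "zero_half N (- step_of N d) = zero_half N (step_of N (- d))"
proof -
  obtain h where h: "int N div 2 = h" "int N = 2*h \<or> int N = 2*h+1" by (rule half)
  show ?thesis using assms h unfolding zero_half_def step_of_def h(1)
    by (auto simp: abs_if split: if_splits; presburger)
qed
definition enc :: "nat \<Rightarrow> int \<Rightarrow> int \<Rightarrow> int" where
  "enc N n m = zero_half N (step_of N (m - n))"

lemma enc_cases: assumes "\<bar>d\<bar> < int N" "d \<noteq> 0"
  shows "(2*\<bar>d\<bar> = int N \<and> zero_half N (step_of N d) = 0) \<or>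
         (2*\<bar>d\<bar> \<noteq> int N \<and> zero_half N (step_of N d) \<noteq> 0 \<and>
          (zero_half N (step_of N d) = d \<or> zero_half N (step_of N d) = d - int N \<or>
           zero_half N (step_of N d) = d + int N))"
proof (cases "2*\<bar>d\<bar> = int N")
  case True
  have h: "int N div 2 = \<bar>d\<bar>" by (simp add: True[symmetric])
  have s: "step_of N d = \<bar>d\<bar>" using True h by (simp add: step_of_def)
  show ?thesis using True unfolding s zero_half_def by simp
next
  case False
  have "step_of N d = d \<or> step_of N d = d - int N \<or> step_of N d = d + int N"
    unfolding step_of_def using False by auto
  moreover have "2*\<bar>step_of N d\<bar> \<noteq> int N" "step_of N d \<noteq> 0"
    using False assms unfolding step_of_def by (auto simp: abs_if)
  ultimately show ?thesis using False unfolding zero_half_def by auto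
qed

lemma enc_inj:
  assumes "0 \<le> n" "n < int N" "0 \<le> m" "m < int N" "0 \<le> m'" "m' < int N"
    "m \<noteq> n" "m' \<noteq> n" "enc N n m = enc N n m'"
  shows "m = m'"
proof -
  have a: "\<bar>m - n\<bar> < int N" "m - n \<noteq> 0" "\<bar>m' - n\<bar> < int N" "m' - n \<noteq> 0" using assms by auto
  note c1 = enc_cases[OF a(1,2)] and c2 = enc_cases[OF a(3,4)]
  have e: "zero_half N (step_of N (m - n)) = zero_half N (step_of N (m' - n))"
    using assms(9) unfolding enc_def .
  show ?thesis
  proof (cases "2*\<bar>m - n\<bar> = int N")
    case True
    then have "2*\<bar>m' - n\<bar> = int N" using c1 c2 e by auto
    then show ?thesis using True assms(1-6) by (auto simp: abs_if split: if_splits)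
  next
    case False
    then have "2*\<bar>m' - n\<bar> \<noteq> int N" using c1 c2 e by auto
    then show ?thesis using False c1 c2 e assms(1-6) by auto
  qed
qed

lemma modlem: fixes k N :: nat assumes "k < N" "N \<ge> 2"
  shows "((k+1) mod N = (k+N-1) mod N) \<longleftrightarrow> N = 2"
    "(k+1) mod N \<noteq> k" "(k+N-1) mod N \<noteq> k"
proof -
  have a: "(k+1) mod N = (if k+1 = N then 0 else k+1)" using assms by (simp add: mod_if)
  have b: "(k+N-1) mod N = (if k = 0 then N - 1 else k - 1)" using assms
    by (cases k) (auto simp: mod_if)
  show "((k+1) mod N = (k+N-1) mod N) \<longleftrightarrow> N = 2"
    "(k+1) mod N \<noteq> k" "(k+N-1) mod N \<noteq> k" unfolding a b using assms by auto
qed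

lemma pth_eq: "is_path N p \<Longrightarrow> pth p j = p ! (j mod N)"
  by (simp add: pth_def is_path_def)

lemma nth_range: assumes "is_path N p" "i < N" shows "0 \<le> p ! i \<and> p ! i < int N"
proof -
  have "p ! i \<in> set p" using assms unfolding is_path_def by (metis nth_mem)
  then have "p ! i \<in> {0..<int N}" using assms by (simp add: is_path_def)
  then show ?thesis by simp
qed

lemma nth_inj: assumes "is_path N p" "i < N" "j < N" "p ! i = p ! j" shows "i = j"
  using assms by (simp add: is_path_def nth_eq_iff_index_eq)

lemma idx_ex: assumes "is_path N p" "n < N" shows "\<exists>k<N. p ! k = int n"
proof -
  have "int n \<in> set p" using assms by (simp add: is_path_def)
  then show ?thesis using assms by (auto simp: is_path_def in_set_conv_nth)
qed

lemma col:
  assumes P: "is_path N p" and N2: "N \<ge> 2" and kN: "k < N" and pk: "p ! k = int n"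
  defines "s \<equiv> pth p (k+1)" and "t \<equiv> pth p (prev_idx N k)"
  shows "edge_col p n = (min (enc N (int n) s) (enc N (int n) t), max (enc N (int n) s) (enc N (int n) t))"
    "{m. {int n, m} \<in> shape p} = {s, t}"
    "0 \<le> s" "s < int N" "0 \<le> t" "t < int N" "s \<noteq> int n" "t \<noteq> int n"
    "(s = t) \<longleftrightarrow> N = 2"
proof -
  have len: "length p = N" using P by (simp add: is_path_def)
  have pvd: "prev_idx N k = (if k = 0 then N - 1 else k - 1)" using kN unfolding prev_idx_def
    by (cases k) (auto simp: mod_if)
  have pv: "prev_idx N k < N" "(prev_idx N k + 1) mod N = k" using kN N2
    unfolding pvd by (auto simp: mod_if)
  have se: "s = p ! ((k+1) mod N)" unfolding s_def using P by (simp add: pth_eq)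
  have te: "t = p ! (prev_idx N k)" unfolding t_def using P pv by (simp add: pth_eq)
  have k1: "(k+1) mod N < N" using kN by simp
  show r: "0 \<le> s" "s < int N" "0 \<le> t" "t < int N"
    using nth_range[OF P k1] nth_range[OF P pv(1)] se te by auto
  show sn: "s \<noteq> int n" using nth_inj[OF P k1 kN] se pk modlem(2)[OF kN N2] by auto
  show tn: "t \<noteq> int n" using nth_inj[OF P pv(1) kN] te pk modlem(3)[OF kN N2]
    by (auto simp: prev_idx_def)
  have "(s = t) \<longleftrightarrow> (k+1) mod N = prev_idx N k"
    using nth_inj[OF P k1 pv(1)] se te by auto
  then show "(s = t) \<longleftrightarrow> N = 2" using modlem(1)[OF kN N2] by (simp add: prev_idx_def)
  have the: "(THE k. k < N \<and> p ! k = int n) = k"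
    using kN pk nth_inj[OF P] by (intro the_equality) auto
  have pkk: "pth p k = int n" using P kN pk by (simp add: pth_eq)
  have ps1: "psteps p k = step_of N (s - int n)"
    unfolding psteps_def pdiff_def len s_def pkk by simp
  have pt1: "pth p (prev_idx N k + 1) = int n" using P pv pk by (simp add: pth_eq)
  have ps2: "psteps p (prev_idx N k) = step_of N (int n - t)"
    unfolding psteps_def pdiff_def len t_def pt1 by simp
  have "\<bar>int n - t\<bar> < int N" using r pk nth_range[OF P kN] by auto
  then have zz: "zero_half N (- psteps p (prev_idx N k)) = enc N (int n) t"
    unfolding ps2 enc_def using zh_neg by simp
  show "edge_col p n = (min (enc N (int n) s) (enc N (int n) t), max (enc N (int n) s) (enc N (int n) t))"
    unfolding edge_col_def Let_def len the zz using ps1 by (simp add: enc_def)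
  show "{m. {int n, m} \<in> shape p} = {s, t}"
  proof (intro equalityI subsetI)
    fix m assume "m \<in> {m. {int n, m} \<in> shape p}"
    then obtain j where j: "j < N" "{int n, m} = {pth p j, pth p (j+1)}"
      unfolding shape_def len by auto
    have pj: "pth p j = p ! j" using P j(1) by (simp add: pth_eq)
    have pj1: "pth p (j+1) = p ! ((j+1) mod N)" using P by (simp add: pth_eq)
    have j1: "(j+1) mod N < N" using j(1) by simp
    show "m \<in> {s, t}"
    proof (cases "int n = pth p j")
      case True
      then have "j = k" using nth_inj[OF P j(1) kN] pj pk by metis
      then show ?thesis using j(2) True unfolding s_def by (auto simp: doubleton_eq_iff)
    next
      case False
      then have a: "int n = pth p (j+1)" "m = pth p j" using j(2) by (auto simp: doubleton_eq_iff)
      then have "(j+1) mod N = k" using nth_inj[OF P j1 kN] pj1 pk by metis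
      then have "j = prev_idx N k" using j(1) unfolding prev_idx_def
        by (cases "j+1 = N") (auto simp: mod_if)
      then show ?thesis using a(2) unfolding t_def by blast
    qed
  next
    fix m assume "m \<in> {s, t}"
    moreover have "{pth p k, pth p (k+1)} \<in> shape p" unfolding shape_def len using kN by blast
    then have "{int n, s} \<in> shape p" unfolding s_def pkk .
    moreover have "{pth p (prev_idx N k), pth p (prev_idx N k + 1)} \<in> shape p"
      unfolding shape_def len using pv(1) by blast
    then have "{int n, t} \<in> shape p" unfolding t_def pt1 by (simp only: insert_commute)
    ultimately show "m \<in> {m. {int n, m} \<in> shape p}" by auto
  qed
qed

lemma minmax_eq:
  fixes a b c d :: "'a::linorder"
  shows "((min a b, max a b) = (min c d, max c d)) = ({a,b} = {c,d} \<and> (a=b) = (c=d))"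
  by (auto simp: min_def max_def doubleton_eq_iff split: if_splits)

lemma col_ex:
  assumes P: "is_path N p" and N2: "N \<ge> 2" and nN: "n < N"
  shows "\<exists>s t. edge_col p n = (min (enc N (int n) s) (enc N (int n) t), max (enc N (int n) s) (enc N (int n) t))
    \<and> {m. {int n, m} \<in> shape p} = {s, t} \<and>
    0 \<le> s \<and> s < int N \<and> 0 \<le> t \<and> t < int N \<and> s \<noteq> int n \<and> t \<noteq> int n \<and>
    ((s = t) \<longleftrightarrow> N = 2)"
proof -
  obtain k where k: "k < N" "p ! k = int n" using idx_ex[OF P nN] by blast
  show ?thesis using col[OF P N2 k] by blast
qed

lemma col_equiv:
  assumes P: "is_path N p" and P': "is_path N p'" and N2: "N \<ge> 2" and nN: "n < N"
  shows "(edge_col p n = edge_col p' n) \<longleftrightarrow>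
    ({m. {int n, m} \<in> shape p} = {m. {int n, m} \<in> shape p'})"
proof -
  obtain s t where st: "edge_col p n = (min (enc N (int n) s) (enc N (int n) t), max (enc N (int n) s) (enc N (int n) t))"
    "{m. {int n, m} \<in> shape p} = {s, t}"
    "0 \<le> s" "s < int N" "0 \<le> t" "t < int N" "s \<noteq> int n" "t \<noteq> int n"
    "(s = t) \<longleftrightarrow> N = 2"
    using col_ex[OF P N2 nN] by blast
  obtain s' t' where st': "edge_col p' n = (min (enc N (int n) s') (enc N (int n) t'), max (enc N (int n) s') (enc N (int n) t'))"
    "{m. {int n, m} \<in> shape p'} = {s', t'}"
    "0 \<le> s'" "s' < int N" "0 \<le> t'" "t' < int N" "s' \<noteq> int n" "t' \<noteq> int n"
    "(s' = t') \<longleftrightarrow> N = 2"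
    using col_ex[OF P' N2 nN] by blast
  define f where "f = enc N (int n)"
  define A where "A = {m. 0 \<le> m \<and> m < int N \<and> m \<noteq> int n}"
  have inj: "inj_on f A" unfolding inj_on_def f_def A_def using nN
  proof (intro ballI impI)
    fix x y assume "x \<in> {m. 0 \<le> m \<and> m < int N \<and> m \<noteq> int n}" "y \<in> {m. 0 \<le> m \<and> m < int N \<and> m \<noteq> int n}"
      "enc N (int n) x = enc N (int n) y"
    then show "x = y" using enc_inj[of "int n" N x y] nN by auto
  qed
  have sub: "{s,t} \<subseteq> A" "{s',t'} \<subseteq> A" unfolding A_def using st st' by auto
  have e1: "(f s = f t) = (s = t)" using inj sub(1) by (auto dest: inj_onD)
  have e2: "(f s' = f t') = (s' = t')" using inj sub(2) by (auto dest: inj_onD)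
  have "(edge_col p n = edge_col p' n) \<longleftrightarrow> {f s, f t} = {f s', f t'}"
    unfolding st(1) st'(1) f_def[symmetric] minmax_eq using e1 e2 st(9) st'(9) by simp
  also have "\<dots> \<longleftrightarrow> f ` {s,t} = f ` {s',t'}" by simp
  also have "\<dots> \<longleftrightarrow> {s,t} = {s',t'}" using inj_on_image_eq_iff[OF inj sub] .
  finally show ?thesis unfolding st(2) st'(2) .
qed

lemma shape_sub:
  assumes P: "is_path N p" and nb: "\<And>n. n < N \<Longrightarrow> {m. {int n, m} \<in> shape p} = {m. {int n, m} \<in> shape p'}"
  shows "shape p \<subseteq> shape p'"
proof
  fix x assume "x \<in> shape p"
  then obtain j where j: "j < N" "x = {pth p j, pth p (j+1)}"
    using P unfolding shape_def is_path_def by auto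
  have "pth p j = p ! j" using P j(1) by (simp add: pth_eq)
  then have r: "0 \<le> pth p j" "pth p j < int N" using nth_range[OF P j(1)] by auto
  define n where "n = nat (pth p j)"
  have nn: "int n = pth p j" "n < N" unfolding n_def using r by auto
  have "{int n, pth p (j+1)} \<in> shape p" unfolding nn(1) using j P unfolding shape_def is_path_def
    by auto
  then have "pth p (j+1) \<in> {m. {int n, m} \<in> shape p'}" using nb[OF nn(2)] by auto
  then show "x \<in> shape p'" using j(2) nn(1) by simp
qed

theorem mainTheorem4:
  fixes N :: nat and p p' :: "int list"
  assumes "N \<ge> 2" and "is_path N p" and "is_path N p'"
  shows "shape p = shape p' \<longleftrightarrow> edge_matrix p = edge_matrix p'"
proof -
  have len: "length p = N" "length p' = N" using assms by (auto simp: is_path_def)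
  have "edge_matrix p = edge_matrix p' \<longleftrightarrow> (\<forall>n<N. edge_col p n = edge_col p' n)"
    unfolding edge_matrix_def len by (auto simp: map_eq_conv)
  also have "\<dots> \<longleftrightarrow> (\<forall>n<N. {m. {int n, m} \<in> shape p} = {m. {int n, m} \<in> shape p'})"
    using col_equiv[OF assms(2,3,1)] by auto
  also have "\<dots> \<longleftrightarrow> shape p = shape p'"
  proof
    assume h: "\<forall>n<N. {m. {int n, m} \<in> shape p} = {m. {int n, m} \<in> shape p'}"
    show "shape p = shape p'"
      using shape_sub[OF assms(2)] shape_sub[OF assms(3)] h by (metis subset_antisym)
  qed simp
  finally show ?thesis by simp
qed

end
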